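(* Let $K$ be a finite simplicial complex, $N\subseteq K$ a closed set, and for $i=1,\dots,n$ let $\mathcal{V}_i$ be a multivector field on $K$, $\mathcal{M}_i$ a Morse decomposition (under $\mathcal{V}_i$) of an isolated invariant set $S_i$ isolated by $N$, and $G_i$ the corresponding Conley-Morse graph. Suppose each Morse set $M\in\mathcal{M}_i$ is associated with a unique index pair $(P_M,E_M)$ in $N$ for $M$. Then the algorithm described below (Algorithm FindConleyMorseFiltrations) outputs exactly the set of all Conley-Morse filtrations for $G_1,\dots,G_n$.
   Context: Notation: $\sigma\le\tau$ means $\sigma$ is a face of $\tau$; $\mathrm{cl}(A)=\{\tau:\tau\le\sigma \text{ for some }\sigma\in A\}$; $A$ is closed if $A=\mathrm{cl}(A)$; $\mathrm{mo}(A)=\mathrm{cl}(A)\setminus A$. A multivector is a convex set $A\subseteq K$ (no $\sigma\in K\setminus A$ with $\sigma_1\le\sigma\le\sigma_2$ for $\sigma_1,\sigma_2\in A$); a multivector field $\mathcal{V}$ is a partition of $K$ into multivectors, $[\sigma]_{\mathcal V}$ the multivector containing $\sigma$, and $F_{\mathcal V}(\sigma)=[\sigma]_{\mathcal V}\cup\mathrm{cl}(\sigma)$, $F_{\mathcal V}(A)=\bigcup_{\sigma\in A}F_{\mathcal V}(\sigma)$. A path is a finite sequence $\sigma_1,\dots,\sigma_m$ with $\sigma_{j}\in F_{\mathcal V}(\sigma_{j-1})$; a solution is a bi-infinite such sequence. A multivector $V$ is critical if $H_k(\mathrm{cl}(V),\mathrm{mo}(V))\ne 0$ for some $k$ (homology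 over a finite field), regular otherwise. A solution $\rho:\mathbb Z\to K$ is essential if for each $i$ with $[\rho(i)]_{\mathcal V}$ regular there are $i^-<i<i^+$ with $[\rho(i^\pm)]_{\mathcal V}\ne[\rho(i)]_{\mathcal V}$. $\mathrm{inv}_{\mathcal V}(A)$ is the set of $\sigma\in A$ lying on an essential solution with image in $A$. $S$ is invariant if $\mathrm{inv}(S)=S$. An invariant set $S$ is isolated by a closed set $N$ if $S$ is a union of multivectors of $\mathcal V$ and every path in $N$ with both endpoints in $S$ lies in $S$. A Morse decomposition of $S$ (indexed by a finite poset $\mathbb P$) is a family $\{M_p\}_{p\in\mathbb P}$ of mutually disjoint isolated invariant subsets of $S$ such that every essential solution $\rho$ in $S$ either has image in some $M_r$ or has $\alpha(\rho)\subseteq M_q$, $\omega(\rho)\subseteq M_p$ with $q>p$, where $\alpha(\rho)=\bigcap_{i\ge1}\rho((-\infty,-i])$, $\omega(\rho)=\bigcap_{i\ge1}\rho([i,\infty))$. The Conley-Morse graph has one vertex per Morse set, a directed edge $M\to M'$ iff there is a connection (a path in $N$ starting in $M$ and ending in $M'$), and vertices annotated by Poincaré polynomials of the Conley indices. An index pair in $N$ for $S$ (isolated by $N$) is a pair of closed sets $E\subseteq P\subseteq N$ with: $F_{\mathcal V}(E)\cap N\subseteq E$; $F_{\mathcal V}(P)\cap N\subseteq P$; $F_{\mathcal V}(P\setminus E)\subseteq N$; $S=\mathrm{inv}(P\setminus E)$. A sequence $\{(P_i,E_i)\}_{i=a}^b$, where $(P_i,E_i)$ is the index pair of some Morse set in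 $\mathcal M_i$, is feasible if $(P_i\setminus E_i)\cap(P_{i+1}\setminus E_{i+1})\ne\emptyset$ for $a\le i<b$; it is maximal if moreover there is no index pair $(P_{a-1},E_{a-1})$ of a Morse set in $\mathcal M_{a-1}$ with $(P_{a-1}\setminus E_{a-1})\cap(P_a\setminus E_a)\neq\emptyset$ and no index pair $(P_{b+1},E_{b+1})$ of a Morse set in $\mathcal M_{b+1}$ with $(P_b\setminus E_b)\cap(P_{b+1}\setminus E_{b+1})\ne\emptyset$. The Conley-Morse filtration of a maximal sequence is the relative zigzag filtration $(P_a,E_a)\supseteq(P_a\cap P_{a+1},E_a\cap E_{a+1})\subseteq(P_{a+1},E_{a+1})\supseteq\cdots\subseteq(P_b,E_b)$. Algorithm FindConleyMorseFiltrations: initialize sets $alive=\emptyset$, $all=\emptyset$. For $i=1,\dots,n$: set $to\_remove=\emptyset$, $still\_alive=\emptyset$; for each sequence $s\in alive$ with last term $(P',E')$ and each $M\in\mathcal M_i$ with $(P,E)=(P_M,E_M)$ satisfying $(P\setminus E)\cap(P'\setminus E')\ne\emptyset$: add to $still\_alive$ a copy of $s$ with $(P,E)$ appended, mark $M$ as "in a sequence", and add $s$ to $to\_remove$. Then let $dead=alive\setminus to\_remove$, set $alive=still\_alive$, $all=all\cup dead$, and for each $M\in\mathcal M_i$ not marked "in a sequence" add the one-term sequence $((P_M,E_M))$ to $alive$. After the loop set $all=all\cup alive$ and output the relative zigzag filtrations of the sequences in $all$. *)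

theory Defs
  imports Main
begin

definition simplicial_complex :: "'v set set \<Rightarrow> bool" where
  "simplicial_complex K \<longleftrightarrow> finite K \<and> (\<forall>\<sigma>\<in>K. finite \<sigma> \<and> \<sigma> \<noteq> {}) \<and>
     (\<forall>\<sigma>\<in>K. \<forall>\<tau>. \<tau> \<subseteq> \<sigma> \<and> \<tau> \<noteq> {} \<longrightarrow> \<tau> \<in> K)"

definition cl :: "'v set set \<Rightarrow> 'v set set \<Rightarrow> 'v set set" where
  "cl K A = {\<tau>\<in>K. \<exists>\<sigma>\<in>A. \<tau> \<subseteq> \<sigma>}"

definition closed_set :: "'v set set \<Rightarrow> 'v set set \<Rightarrow> bool" where
  "closed_set K A \<longleftrightarrow> A \<subseteq> K \<and> cl K A = A"

definition mo :: "'v set set \<Rightarrow> 'v set set \<Rightarrow> 'v set set" where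
  "mo K A = cl K A - A"

definition convex_set :: "'v set set \<Rightarrow> 'v set set \<Rightarrow> bool" where
  "convex_set K A \<longleftrightarrow> A \<subseteq> K \<and>
     (\<forall>\<sigma>\<in>K. \<forall>\<sigma>1\<in>A. \<forall>\<sigma>2\<in>A. \<sigma>1 \<subseteq> \<sigma> \<and> \<sigma> \<subseteq> \<sigma>2 \<longrightarrow> \<sigma> \<in> A)"

definition multivector_field :: "'v set set \<Rightarrow> 'v set set set \<Rightarrow> bool" where
  "multivector_field K V \<longleftrightarrow> (\<forall>A\<in>V. A \<noteq> {} \<and> convex_set K A) \<and> \<Union>V = K \<and>
     (\<forall>A\<in>V. \<forall>B\<in>V. A \<noteq> B \<longrightarrow> A \<inter> B = {})"

definition mv_of :: "'v set set set \<Rightarrow> 'v set \<Rightarrow> 'v set set" where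
  "mv_of V \<sigma> = (THE A. A \<in> V \<and> \<sigma> \<in> A)"

definition Fv :: "'v set set \<Rightarrow> 'v set set set \<Rightarrow> 'v set \<Rightarrow> 'v set set" where
  "Fv K V \<sigma> = mv_of V \<sigma> \<union> cl K {\<sigma>}"

definition FvS :: "'v set set \<Rightarrow> 'v set set set \<Rightarrow> 'v set set \<Rightarrow> 'v set set" where
  "FvS K V A = (\<Union>\<sigma>\<in>A. Fv K V \<sigma>)"

definition is_path :: "'v set set \<Rightarrow> 'v set set set \<Rightarrow> 'v set list \<Rightarrow> bool" where
  "is_path K V xs \<longleftrightarrow> xs \<noteq> [] \<and> set xs \<subseteq> K \<and>
     (\<forall>j. Suc j < length xs \<longrightarrow> xs ! Suc j \<in> Fv K V (xs ! j))"

definition is_solution :: "'v set set \<Rightarrow> 'v set set set \<Rightarrow> (int \<Rightarrow> 'v set) \<Rightarrow> bool" where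
  "is_solution K V \<rho> \<longleftrightarrow> (\<forall>i. \<rho> i \<in> K \<and> \<rho> (i + 1) \<in> Fv K V (\<rho> i))"

text \<open>For a convex set \<open>A\<close> the relative chain complex \<open>C(cl A)/C(mo A)\<close> is
  canonically the complex of chains supported on \<open>cl A - mo A = A\<close>, with the boundary
  projected onto \<open>A\<close>. Oriented simplices use the vertex order: the boundary of
  \<open>[v_0<\<dots><v_k]\<close> is \<open>\<Sum>(-1)^i [\<dots>, v_i omitted, \<dots>]\<close>.\<close>

definition rel_chains :: "'v set set \<Rightarrow> nat \<Rightarrow> ('v set \<Rightarrow> 'f::field) set" where
  "rel_chains A k = {c. \<forall>\<sigma>. c \<sigma> \<noteq> 0 \<longrightarrow> \<sigma> \<in> A \<and> card \<sigma> = Suc k}"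

definition rel_bd :: "'v::linorder set set \<Rightarrow> ('v set \<Rightarrow> 'f::field) \<Rightarrow> 'v set \<Rightarrow> 'f" where
  "rel_bd A c \<tau> = (if \<tau> \<in> A then
      (\<Sum>\<sigma>\<in>{\<sigma>\<in>A. \<tau> \<subseteq> \<sigma> \<and> card \<sigma> = Suc (card \<tau>)}.
          (-1) ^ card {w\<in>\<sigma>. w < the_elem (\<sigma> - \<tau>)} * c \<sigma>)
    else 0)"

definition rel_homology_nonzero :: "'f::field itself \<Rightarrow> 'v::linorder set set \<Rightarrow> nat \<Rightarrow> bool" where
  "rel_homology_nonzero F A k \<longleftrightarrow>
     (\<exists>z::'v set \<Rightarrow> 'f. z \<in> rel_chains A k \<and> rel_bd A z = (\<lambda>_. 0) \<and>
        \<not> (\<exists>b::'v set \<Rightarrow> 'f. b \<in> rel_chains A (Suc k) \<and> rel_bd A b = z))"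

definition critical :: "'f::field itself \<Rightarrow> 'v::linorder set set \<Rightarrow> bool" where
  "critical F A \<longleftrightarrow> (\<exists>k. rel_homology_nonzero F A k)"

definition essential_solution ::
  "'f::field itself \<Rightarrow> 'v::linorder set set \<Rightarrow> 'v set set set \<Rightarrow> (int \<Rightarrow> 'v set) \<Rightarrow> bool" where
  "essential_solution F K V \<rho> \<longleftrightarrow> is_solution K V \<rho> \<and>
     (\<forall>i. \<not> critical F (mv_of V (\<rho> i)) \<longrightarrow>
        (\<exists>i'<i. mv_of V (\<rho> i') \<noteq> mv_of V (\<rho> i)) \<and>
        (\<exists>i'>i. mv_of V (\<rho> i') \<noteq> mv_of V (\<rho> i)))"

definition inv_set ::
  "'f::field itself \<Rightarrow> 'v::linorder set set \<Rightarrow> 'v set set set \<Rightarrow> 'v set set \<Rightarrow> 'v set set" where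
  "inv_set F K V A = {\<sigma>\<in>A. \<exists>\<rho>. essential_solution F K V \<rho> \<and> range \<rho> \<subseteq> A \<and> \<sigma> \<in> range \<rho>}"

definition invariant ::
  "'f::field itself \<Rightarrow> 'v::linorder set set \<Rightarrow> 'v set set set \<Rightarrow> 'v set set \<Rightarrow> bool" where
  "invariant F K V S \<longleftrightarrow> inv_set F K V S = S"

definition isolated_by ::
  "'f::field itself \<Rightarrow> 'v::linorder set set \<Rightarrow> 'v set set set \<Rightarrow> 'v set set \<Rightarrow> 'v set set \<Rightarrow> bool" where
  "isolated_by F K V N S \<longleftrightarrow> closed_set K N \<and> S \<subseteq> N \<and> invariant F K V S \<and>
     (\<exists>W\<subseteq>V. S = \<Union>W) \<and>
     (\<forall>xs. is_path K V xs \<and> set xs \<subseteq> N \<and> hd xs \<in> S \<and> last xs \<in> S \<longrightarrow> set xs \<subseteq> S)"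

definition alpha_limit :: "(int \<Rightarrow> 'v set) \<Rightarrow> 'v set set" where
  "alpha_limit \<rho> = (\<Inter>i\<in>{1..}. \<rho> ` {..-i})"

definition omega_limit :: "(int \<Rightarrow> 'v set) \<Rightarrow> 'v set set" where
  "omega_limit \<rho> = (\<Inter>i\<in>{1..}. \<rho> ` {i..})"

definition morse_decomposition ::
  "'f::field itself \<Rightarrow> 'v::linorder set set \<Rightarrow> 'v set set set \<Rightarrow> 'v set set \<Rightarrow> 'v set set \<Rightarrow>
   'p set \<Rightarrow> ('p \<Rightarrow> 'p \<Rightarrow> bool) \<Rightarrow> ('p \<Rightarrow> 'v set set) \<Rightarrow> bool" where
  "morse_decomposition F K V N S P le M \<longleftrightarrow> finite P \<and>
     (\<forall>p\<in>P. le p p) \<and> (\<forall>p\<in>P. \<forall>q\<in>P. le p q \<and> le q p \<longrightarrow> p = q) \<and>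
     (\<forall>p\<in>P. \<forall>q\<in>P. \<forall>r\<in>P. le p q \<and> le q r \<longrightarrow> le p r) \<and>
     (\<forall>p\<in>P. M p \<subseteq> S \<and> isolated_by F K V N (M p)) \<and>
     (\<forall>p\<in>P. \<forall>q\<in>P. p \<noteq> q \<longrightarrow> M p \<inter> M q = {}) \<and>
     (\<forall>\<rho>. essential_solution F K V \<rho> \<and> range \<rho> \<subseteq> S \<longrightarrow>
        (\<exists>r\<in>P. range \<rho> \<subseteq> M r) \<or>
        (\<exists>p\<in>P. \<exists>q\<in>P. le p q \<and> p \<noteq> q \<and> alpha_limit \<rho> \<subseteq> M q \<and> omega_limit \<rho> \<subseteq> M p))"

definition index_pair ::
  "'f::field itself \<Rightarrow> 'v::linorder set set \<Rightarrow> 'v set set set \<Rightarrow> 'v set set \<Rightarrow> 'v set set \<Rightarrow>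
   'v set set \<Rightarrow> 'v set set \<Rightarrow> bool" where
  "index_pair F K V N S P E \<longleftrightarrow> closed_set K P \<and> closed_set K E \<and> E \<subseteq> P \<and> P \<subseteq> N \<and>
     FvS K V E \<inter> N \<subseteq> E \<and> FvS K V P \<inter> N \<subseteq> P \<and> FvS K V (P - E) \<subseteq> N \<and>
     S = inv_set F K V (P - E)"

type_synonym 'v ipair = "'v set set \<times> 'v set set"

definition linked :: "'v ipair \<Rightarrow> 'v ipair \<Rightarrow> bool" where
  "linked x y \<longleftrightarrow> (fst x - snd x) \<inter> (fst y - snd y) \<noteq> {}"

text \<open>\<open>ip i p\<close> is the index pair associated with the Morse set \<open>M_p\<close> of \<open>\<M>_i\<close>;
  \<open>Pi i\<close> indexes \<open>\<M>_i\<close>. A sequence \<open>{(P_j,E_j)}_{j=a}^{b}\<close> is given by its start \<open>a\<close>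
  and the list of its terms.\<close>
definition maximal_sequence ::
  "nat \<Rightarrow> (nat \<Rightarrow> 'p set) \<Rightarrow> (nat \<Rightarrow> 'p \<Rightarrow> 'v ipair) \<Rightarrow> nat \<Rightarrow> 'v ipair list \<Rightarrow> bool" where
  "maximal_sequence n Pi ip a xs \<longleftrightarrow> xs \<noteq> [] \<and> 1 \<le> a \<and> a + length xs - 1 \<le> n \<and>
     (\<forall>j<length xs. \<exists>p\<in>Pi (a + j). xs ! j = ip (a + j) p) \<and>
     (\<forall>j. Suc j < length xs \<longrightarrow> linked (xs ! j) (xs ! Suc j)) \<and>
     \<not> (1 < a \<and> (\<exists>p\<in>Pi (a - 1). linked (ip (a - 1) p) (hd xs))) \<and>
     \<not> (a + length xs - 1 < n \<and> (\<exists>p\<in>Pi (a + length xs). linked (last xs) (ip (a + length xs) p)))"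

text \<open>Relative zigzag filtration
  \<open>(P_a,E_a) \<supseteq> (P_a\<inter>P_{a+1},E_a\<inter>E_{a+1}) \<subseteq> (P_{a+1},E_{a+1}) \<supseteq> \<dots>\<close>,
  recorded as the list of its pairs (the inclusions are determined).\<close>
fun zigzag :: "'v ipair list \<Rightarrow> 'v ipair list" where
  "zigzag [] = []"
| "zigzag [x] = [x]"
| "zigzag (x # y # r) = x # (fst x \<inter> fst y, snd x \<inter> snd y) # zigzag (y # r)"

definition conley_morse_filtrations ::
  "nat \<Rightarrow> (nat \<Rightarrow> 'p set) \<Rightarrow> (nat \<Rightarrow> 'p \<Rightarrow> 'v ipair) \<Rightarrow> 'v ipair list set" where
  "conley_morse_filtrations n Pi ip =
     {zigzag xs | a xs. maximal_sequence n Pi ip a xs}"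

definition alg_step ::
  "(nat \<Rightarrow> 'p set) \<Rightarrow> (nat \<Rightarrow> 'p \<Rightarrow> 'v ipair) \<Rightarrow> nat \<Rightarrow>
   'v ipair list set \<times> 'v ipair list set \<Rightarrow> 'v ipair list set \<times> 'v ipair list set" where
  "alg_step Pi ip i st = (let alive = fst st; all = snd st;
      still_alive = {s @ [ip i p] | s p. s \<in> alive \<and> p \<in> Pi i \<and> linked (last s) (ip i p)};
      to_remove = {s\<in>alive. \<exists>p\<in>Pi i. linked (last s) (ip i p)};
      marked = {p\<in>Pi i. \<exists>s\<in>alive. linked (last s) (ip i p)};
      dead = alive - to_remove
    in (still_alive \<union> {[ip i p] | p. p \<in> Pi i \<and> p \<notin> marked}, all \<union> dead))"

fun alg_state ::
  "(nat \<Rightarrow> 'p set) \<Rightarrow> (nat \<Rightarrow> 'p \<Rightarrow> 'v ipair) \<Rightarrow> nat \<Rightarrow> 'v ipair list set \<times> 'v ipair list set" where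
  "alg_state Pi ip 0 = ({}, {})"
| "alg_state Pi ip (Suc i) = alg_step Pi ip (Suc i) (alg_state Pi ip i)"

definition find_conley_morse_filtrations ::
  "nat \<Rightarrow> (nat \<Rightarrow> 'p set) \<Rightarrow> (nat \<Rightarrow> 'p \<Rightarrow> 'v ipair) \<Rightarrow> 'v ipair list set" where
  "find_conley_morse_filtrations n Pi ip =
     zigzag ` (snd (alg_state Pi ip n) \<union> fst (alg_state Pi ip n))"

end

theory Submission
  imports Defs
begin

definition valid :: "(nat \<Rightarrow> 'p set) \<Rightarrow> (nat \<Rightarrow> 'p \<Rightarrow> 'v ipair) \<Rightarrow> nat \<Rightarrow> 'v ipair list \<Rightarrow> bool" where
  "valid Pi ip a xs \<longleftrightarrow> (\<forall>j<length xs. \<exists>p\<in>Pi (a + j). xs ! j = ip (a + j) p) \<and>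
     (\<forall>j. Suc j < length xs \<longrightarrow> linked (xs ! j) (xs ! Suc j))"

definition leftmax :: "(nat \<Rightarrow> 'p set) \<Rightarrow> (nat \<Rightarrow> 'p \<Rightarrow> 'v ipair) \<Rightarrow> nat \<Rightarrow> 'v ipair list \<Rightarrow> bool" where
  "leftmax Pi ip a xs \<longleftrightarrow> \<not> (1 < a \<and> (\<exists>p\<in>Pi (a - 1). linked (ip (a - 1) p) (hd xs)))"

definition fs :: "(nat \<Rightarrow> 'p set) \<Rightarrow> (nat \<Rightarrow> 'p \<Rightarrow> 'v ipair) \<Rightarrow> nat \<Rightarrow> 'v ipair list \<Rightarrow> bool" where
  "fs Pi ip i xs \<longleftrightarrow> xs \<noteq> [] \<and> length xs \<le> i \<and> valid Pi ip (Suc i - length xs) xs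
     \<and> leftmax Pi ip (Suc i - length xs) xs"

lemma valid_Nil: "valid Pi ip a []"
  by (simp add: valid_def)

lemma valid_snoc: "valid Pi ip a (xs @ [x]) \<longleftrightarrow> valid Pi ip a xs \<and>
   (\<exists>p\<in>Pi (a + length xs). x = ip (a + length xs) p) \<and> (xs \<noteq> [] \<longrightarrow> linked (last xs) x)"
proof -
  have A: "(\<forall>j<length (xs@[x]). \<exists>p\<in>Pi (a + j). (xs@[x]) ! j = ip (a + j) p) \<longleftrightarrow>
     (\<forall>j<length xs. \<exists>p\<in>Pi (a + j). xs ! j = ip (a + j) p) \<and> (\<exists>p\<in>Pi (a + length xs). x = ip (a + length xs) p)"
    by (auto simp: nth_append less_Suc_eq)
  have B: "(\<forall>j. Suc j < length (xs@[x]) \<longrightarrow> linked ((xs@[x]) ! j) ((xs@[x]) ! Suc j)) \<longleftrightarrow>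
     (\<forall>j. Suc j < length xs \<longrightarrow> linked (xs ! j) (xs ! Suc j)) \<and> (xs \<noteq> [] \<longrightarrow> linked (last xs) x)"
  proof
    assume H: "\<forall>j. Suc j < length (xs@[x]) \<longrightarrow> linked ((xs@[x]) ! j) ((xs@[x]) ! Suc j)"
    show "(\<forall>j. Suc j < length xs \<longrightarrow> linked (xs ! j) (xs ! Suc j)) \<and> (xs \<noteq> [] \<longrightarrow> linked (last xs) x)"
    proof (intro conjI allI impI)
      fix j assume "Suc j < length xs"
      then show "linked (xs ! j) (xs ! Suc j)" using H[rule_format, of j] by (simp add: nth_append)
    next
      assume "xs \<noteq> []"
      then show "linked (last xs) x" using H[rule_format, of "length xs - 1"]
        by (simp add: nth_append last_conv_nth)
    qed
  next
    assume H: "(\<forall>j. Suc j < length xs \<longrightarrow> linked (xs ! j) (xs ! Suc j)) \<and> (xs \<noteq> [] \<longrightarrow> linked (last xs) x)"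
    show "\<forall>j. Suc j < length (xs@[x]) \<longrightarrow> linked ((xs@[x]) ! j) ((xs@[x]) ! Suc j)"
    proof (intro allI impI)
      fix j assume j: "Suc j < length (xs@[x])"
      show "linked ((xs@[x]) ! j) ((xs@[x]) ! Suc j)"
      proof (cases "Suc j < length xs")
        case True then show ?thesis using H by (simp add: nth_append)
      next
        case False
        then have jj: "j = length xs - 1" "xs \<noteq> []" using j by auto
        then show ?thesis using H by (auto simp: nth_append last_conv_nth)
      qed
    qed
  qed
  show ?thesis unfolding valid_def using A B by blast
qed

lemma valid_single: "valid Pi ip a [x] \<longleftrightarrow> (\<exists>p\<in>Pi a. x = ip a p)"
  using valid_snoc[of Pi ip a "[]" x] by (simp add: valid_Nil)

lemma fs_last: "fs Pi ip i xs \<Longrightarrow> \<exists>p\<in>Pi i. last xs = ip i p"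
proof -
  assume "fs Pi ip i xs"
  then have ne: "xs \<noteq> []" and le: "length xs \<le> i" and v: "valid Pi ip (Suc i - length xs) xs"
    unfolding fs_def by auto
  have "Suc i - length xs + (length xs - 1) = i" using ne le by (cases xs) auto
  moreover have "length xs - 1 < length xs" using ne by simp
  ultimately show ?thesis using v ne unfolding valid_def by (metis last_conv_nth)
qed

lemma ex_fs: "1 \<le> i \<Longrightarrow> p \<in> Pi i \<Longrightarrow> \<exists>s. fs Pi ip i s \<and> last s = ip i p"
proof (induction i arbitrary: p)
  case 0 then show ?case by simp
next
  case (Suc i)
  show ?case
  proof (cases "1 < Suc i \<and> (\<exists>p'\<in>Pi i. linked (ip i p') (ip (Suc i) p))")
    case False
    then have "fs Pi ip (Suc i) [ip (Suc i) p]"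
      using Suc.prems unfolding fs_def leftmax_def valid_single by auto
    then show ?thesis by auto
  next
    case True
    then obtain p' where p': "p' \<in> Pi i" "linked (ip i p') (ip (Suc i) p)" and i1: "1 \<le> i" by auto
    obtain s where s: "fs Pi ip i s" "last s = ip i p'" using Suc.IH[OF i1 p'(1)] by blast
    have ne: "s \<noteq> []" and le: "length s \<le> i" and v: "valid Pi ip (Suc i - length s) s"
      and lm: "leftmax Pi ip (Suc i - length s) s"
      using s(1) unfolding fs_def by auto
    have e: "Suc (Suc i) - length (s @ [ip (Suc i) p]) = Suc i - length s" by simp
    have e2: "Suc i - length s + length s = Suc i" using le by simp
    have "fs Pi ip (Suc i) (s @ [ip (Suc i) p])"
      unfolding fs_def e
      using ne le v lm p' s(2) Suc.prems(2) by (auto simp: valid_snoc e2 leftmax_def)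
    then show ?thesis by auto
  qed
qed

lemma alive_char: "fst (alg_state Pi ip i) = {xs. fs Pi ip i xs}"
proof (induction i)
  case 0 then show ?case by (auto simp: fs_def)
next
  case (Suc i)
  let ?A = "fst (alg_state Pi ip i)"
  have st: "fst (alg_state Pi ip (Suc i)) =
    {s @ [ip (Suc i) p] | s p. s \<in> ?A \<and> p \<in> Pi (Suc i) \<and> linked (last s) (ip (Suc i) p)} \<union>
    {[ip (Suc i) p] | p. p \<in> Pi (Suc i) \<and> p \<notin> {p\<in>Pi (Suc i). \<exists>s\<in>?A. linked (last s) (ip (Suc i) p)}}"
    by (simp add: alg_step_def Let_def)
  show ?case
  proof (rule set_eqI, rule iffI)
    fix xs assume "xs \<in> fst (alg_state Pi ip (Suc i))"
    then consider (ext) s p where "xs = s @ [ip (Suc i) p]" "fs Pi ip i s" "p \<in> Pi (Suc i)"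
        "linked (last s) (ip (Suc i) p)"
      | (new) p where "xs = [ip (Suc i) p]" "p \<in> Pi (Suc i)"
        "\<not> (\<exists>s. fs Pi ip i s \<and> linked (last s) (ip (Suc i) p))"
      unfolding st Suc.IH by blast
    then show "xs \<in> {xs. fs Pi ip (Suc i) xs}"
    proof cases
      case ext
      have ne: "s \<noteq> []" and le: "length s \<le> i" and v: "valid Pi ip (Suc i - length s) s"
        and lm: "leftmax Pi ip (Suc i - length s) s"
        using ext(2) unfolding fs_def by auto
      have e: "Suc (Suc i) - length (s @ [ip (Suc i) p]) = Suc i - length s" by simp
      have e2: "Suc i - length s + length s = Suc i" using le by simp
      have "fs Pi ip (Suc i) (s @ [ip (Suc i) p])"
        unfolding fs_def e
        using ne le v lm ext by (auto simp: valid_snoc e2 leftmax_def)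
      then show ?thesis using ext(1) by simp
    next
      case new
      have "leftmax Pi ip (Suc i) [ip (Suc i) p]"
        unfolding leftmax_def
      proof
        assume "1 < Suc i \<and> (\<exists>q\<in>Pi (Suc i - 1). linked (ip (Suc i - 1) q) (hd [ip (Suc i) p]))"
        then obtain p' where "1 \<le> i" "p' \<in> Pi i" "linked (ip i p') (ip (Suc i) p)" by auto
        then obtain s where "fs Pi ip i s" "last s = ip i p'" using ex_fs by metis
        then show False using new(3) \<open>linked (ip i p') (ip (Suc i) p)\<close> by metis
      qed
      then show ?thesis using new unfolding fs_def by (auto simp: valid_single)
    qed
  next
    fix xs assume "xs \<in> {xs. fs Pi ip (Suc i) xs}"
    then have F: "fs Pi ip (Suc i) xs" by simp
    then have ne: "xs \<noteq> []" and le: "length xs \<le> Suc i" and v: "valid Pi ip (Suc (Suc i) - length xs) xs"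
        and lm: "leftmax Pi ip (Suc (Suc i) - length xs) xs"
      unfolding fs_def by auto
    obtain ys x where xs: "xs = ys @ [x]" using ne by (metis rev_exhaust)
    show "xs \<in> fst (alg_state Pi ip (Suc i))"
    proof (cases "ys = []")
      case True
      then obtain p where p: "p \<in> Pi (Suc i)" "x = ip (Suc i) p" using v xs by (auto simp: valid_single)
      have "\<not> (\<exists>s. fs Pi ip i s \<and> linked (last s) (ip (Suc i) p))"
      proof
        assume "\<exists>s. fs Pi ip i s \<and> linked (last s) (ip (Suc i) p)"
        then obtain s where s: "fs Pi ip i s" "linked (last s) (ip (Suc i) p)" by blast
        then obtain p' where "p' \<in> Pi i" "last s = ip i p'" using fs_last by metis
        moreover have "1 \<le> i" using s(1) unfolding fs_def by (cases s) auto
        ultimately show False using lm s(2) p True xs unfolding leftmax_def by auto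
      qed
      then show ?thesis unfolding st Suc.IH using p True xs by blast
    next
      case False
      have e: "Suc (Suc i) - length xs = Suc i - length ys" using xs by simp
      have e2: "Suc i - length ys + length ys = Suc i" using le xs by simp
      have v': "valid Pi ip (Suc i - length ys) ys" and p: "\<exists>p\<in>Pi (Suc i). x = ip (Suc i) p"
        and l: "linked (last ys) x"
        using v False unfolding e xs valid_snoc by (auto simp: e2)
      have "hd xs = hd ys" using xs False by simp
      then have "leftmax Pi ip (Suc i - length ys) ys" using lm e unfolding leftmax_def by simp
      then have "fs Pi ip i ys" using False le xs v' unfolding fs_def by simp
      then show ?thesis unfolding st Suc.IH using p l xs by blast
    qed
  qed
qed

lemma all_char: "snd (alg_state Pi ip i) =
  {xs. \<exists>k<i. fs Pi ip k xs \<and> \<not> (\<exists>p\<in>Pi (Suc k). linked (last xs) (ip (Suc k) p))}"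
proof (induction i)
  case 0 then show ?case by simp
next
  case (Suc i)
  have "snd (alg_state Pi ip (Suc i)) = snd (alg_state Pi ip i) \<union>
     (fst (alg_state Pi ip i) - {s\<in>fst (alg_state Pi ip i). \<exists>p\<in>Pi (Suc i). linked (last s) (ip (Suc i) p)})"
    by (simp add: alg_step_def Let_def)
  also have "\<dots> = {xs. \<exists>k<Suc i. fs Pi ip k xs \<and> \<not> (\<exists>p\<in>Pi (Suc k). linked (last xs) (ip (Suc k) p))}"
    unfolding Suc.IH alive_char by (auto simp: less_Suc_eq)
  finally show ?case .
qed

theorem proposition17:
  fixes F :: "'f::{field,finite} itself"
    and K :: "'v::linorder set set" and N :: "'v set set" and n :: nat
    and V :: "nat \<Rightarrow> 'v set set set" and S :: "nat \<Rightarrow> 'v set set"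
    and Pi :: "nat \<Rightarrow> 'p set" and le :: "nat \<Rightarrow> 'p \<Rightarrow> 'p \<Rightarrow> bool"
    and M :: "nat \<Rightarrow> 'p \<Rightarrow> 'v set set"
    and ip :: "nat \<Rightarrow> 'p \<Rightarrow> 'v set set \<times> 'v set set"
  assumes "simplicial_complex K"
    and "closed_set K N"
    and "\<And>i. 1 \<le> i \<Longrightarrow> i \<le> n \<Longrightarrow> multivector_field K (V i)"
    and "\<And>i. 1 \<le> i \<Longrightarrow> i \<le> n \<Longrightarrow> isolated_by F K (V i) N (S i)"
    and "\<And>i. 1 \<le> i \<Longrightarrow> i \<le> n \<Longrightarrow> morse_decomposition F K (V i) N (S i) (Pi i) (le i) (M i)"
    and "\<And>i p. 1 \<le> i \<Longrightarrow> i \<le> n \<Longrightarrow> p \<in> Pi i \<Longrightarrow>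
           index_pair F K (V i) N (M i p) (fst (ip i p)) (snd (ip i p))"
  shows "find_conley_morse_filtrations n Pi ip = conley_morse_filtrations n Pi ip"
proof -
  have ms: "maximal_sequence n Pi ip a xs \<longleftrightarrow> xs \<noteq> [] \<and> 1 \<le> a \<and> a + length xs - 1 \<le> n \<and>
     valid Pi ip a xs \<and> leftmax Pi ip a xs \<and>
     \<not> (a + length xs - 1 < n \<and> (\<exists>p\<in>Pi (a + length xs). linked (last xs) (ip (a + length xs) p)))"
    for a xs unfolding maximal_sequence_def valid_def leftmax_def by blast
  have key: "snd (alg_state Pi ip n) \<union> fst (alg_state Pi ip n) = {xs. \<exists>a. maximal_sequence n Pi ip a xs}"
  proof (rule set_eqI, rule iffI)
    fix xs assume "xs \<in> snd (alg_state Pi ip n) \<union> fst (alg_state Pi ip n)"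
    then consider (d) k where "k < n" "fs Pi ip k xs" "\<not> (\<exists>p\<in>Pi (Suc k). linked (last xs) (ip (Suc k) p))"
      | (a) "fs Pi ip n xs"
      unfolding all_char alive_char by blast
    then show "xs \<in> {xs. \<exists>a. maximal_sequence n Pi ip a xs}"
    proof cases
      case d
      then have "maximal_sequence n Pi ip (Suc k - length xs) xs"
        unfolding ms fs_def by auto
      then show ?thesis by blast
    next
      case a
      then have "maximal_sequence n Pi ip (Suc n - length xs) xs"
        unfolding ms fs_def by auto
      then show ?thesis by blast
    qed
  next
    fix xs assume "xs \<in> {xs. \<exists>a. maximal_sequence n Pi ip a xs}"
    then obtain a where m: "maximal_sequence n Pi ip a xs" by blast
    then have ne: "xs \<noteq> []" and a1: "1 \<le> a" and en: "a + length xs - 1 \<le> n"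
      and v: "valid Pi ip a xs" and lm: "leftmax Pi ip a xs"
      and r: "\<not> (a + length xs - 1 < n \<and> (\<exists>p\<in>Pi (a + length xs). linked (last xs) (ip (a + length xs) p)))"
      unfolding ms by auto
    define k where "k = a + length xs - 1"
    have ak: "Suc k - length xs = a" "Suc k = a + length xs" using ne a1 unfolding k_def by (cases xs; auto)+
    have f: "fs Pi ip k xs" unfolding fs_def ak using ne v lm a1 unfolding k_def by auto
    show "xs \<in> snd (alg_state Pi ip n) \<union> fst (alg_state Pi ip n)"
    proof (cases "k < n")
      case True
      then show ?thesis unfolding all_char using f r ak(2) unfolding k_def by auto
    next
      case False
      then have "k = n" using en unfolding k_def by simp
      then show ?thesis unfolding alive_char using f by auto
    qed
  qed
  show ?thesis unfolding find_conley_morse_filtrations_def conley_morse_filtrations_def key by blast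
qed

end
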